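(* Let $\varphi\colon G\to G$ be an endomorphism of an abelian group $G$ and let $n\in\mathbb N$, $n\neq 0$. Then $\varphi$ is positively expansive if and only if $\varphi^n$ is positively expansive. Analogously, if $\varphi$ is an automorphism, then $\varphi$ is expansive if and only if $\varphi^n$ is expansive.
   Context: $\mathbb N=\{0,1,2,\dots\}$. An endomorphism $\varphi$ of an abelian group $G$ is positively expansive if there is a finite subgroup $S\leq G$ such that for every finite subgroup $F\leq G$ there is $m\in\mathbb N$ with $F\subseteq\sum_{k=0}^m\varphi^kS$. An automorphism $\varphi$ is expansive if there is a finite subgroup $S\leq G$ such that for every finite subgroup $F\leq G$ there is $m\in\mathbb N$ with $F\subseteq\sum_{|k|\leq m}\varphi^kS$. *)

theory Defs
  imports Main "HOL-Library.Set_Algebras"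
begin

text \<open>The abelian group G is the carrier type 'a of class ab_group_add.
  Sums of subsets are Minkowski sums (Set_Algebras), so a finite sum of
  subgroups is the subgroup they generate.\<close>

definition is_subgroup :: "'a::ab_group_add set \<Rightarrow> bool" where
  "is_subgroup H \<longleftrightarrow> 0 \<in> H \<and> (\<forall>x\<in>H. \<forall>y\<in>H. x - y \<in> H)"

definition endomorphism :: "('a::ab_group_add \<Rightarrow> 'a) \<Rightarrow> bool" where
  "endomorphism f \<longleftrightarrow> (\<forall>x y. f (x + y) = f x + f y)"

definition automorphism :: "('a::ab_group_add \<Rightarrow> 'a) \<Rightarrow> bool" where
  "automorphism f \<longleftrightarrow> endomorphism f \<and> bij f"

definition zpow :: "('a \<Rightarrow> 'a) \<Rightarrow> int \<Rightarrow> 'a \<Rightarrow> 'a" where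
  "zpow f k = (if 0 \<le> k then f ^^ nat k else (inv f) ^^ nat (- k))"

definition pos_expansive :: "('a::ab_group_add \<Rightarrow> 'a) \<Rightarrow> bool" where
  "pos_expansive f \<longleftrightarrow>
     (\<exists>S. finite S \<and> is_subgroup S \<and>
        (\<forall>F. finite F \<and> is_subgroup F \<longrightarrow>
           (\<exists>m::nat. F \<subseteq> (\<Sum>k\<in>{0..m}. (f ^^ k) ` S))))"

definition expansive :: "('a::ab_group_add \<Rightarrow> 'a) \<Rightarrow> bool" where
  "expansive f \<longleftrightarrow>
     (\<exists>S. finite S \<and> is_subgroup S \<and>
        (\<forall>F. finite F \<and> is_subgroup F \<longrightarrow>
           (\<exists>m::nat. F \<subseteq> (\<Sum>k\<in>{- int m..int m}. zpow f k ` S))))"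

end

theory Submission
  imports Defs
begin

lemma endo_0: "endomorphism f \<Longrightarrow> f 0 = (0::'a::ab_group_add)"
  unfolding endomorphism_def by (metis add_cancel_left_right)

lemma endo_diff: "endomorphism f \<Longrightarrow> f (x - y) = f x - (f y::'a::ab_group_add)"
  unfolding endomorphism_def by (metis add_diff_cancel diff_add_cancel eq_diff_eq)

lemma endo_comp: "endomorphism f \<Longrightarrow> endomorphism g \<Longrightarrow> endomorphism (f \<circ> g)"
  unfolding endomorphism_def by simp

lemma endo_id: "endomorphism id" unfolding endomorphism_def by simp

lemma endo_pow: "endomorphism f \<Longrightarrow> endomorphism (f ^^ n)"
  by (induction n) (auto simp: endo_id endo_comp)

lemma endo_inv: "endomorphism f \<Longrightarrow> bij f \<Longrightarrow> endomorphism (inv f)"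
  unfolding endomorphism_def
proof (intro allI)
  fix x y assume a: "\<forall>x y. f (x + y) = f x + f y" and b: "bij f"
  have "f (inv f x + inv f y) = x + y" using a b by (simp add: bij_is_surj surj_f_inv_f)
  then show "inv f (x + y) = inv f x + inv f y" using b by (metis bij_is_inj inv_f_f)
qed

lemma endo_zpow: "endomorphism f \<Longrightarrow> bij f \<Longrightarrow> endomorphism (zpow f k)"
  unfolding zpow_def by (simp add: endo_pow endo_inv)

lemma image_set_sum:
  assumes "endomorphism (f::'a::ab_group_add \<Rightarrow> 'a)"
  shows "f ` (sum A I) = sum (\<lambda>i. f ` A i) I"
proof -
  have "\<And>X Y. f ` X + f ` Y = f ` (X + Y)"
  proof
    fix X Y show "f ` X + f ` Y \<subseteq> f ` (X + Y)"
    proof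
      fix z assume "z \<in> f ` X + f ` Y"
      then obtain a b where ab: "a \<in> X" "b \<in> Y" "z = f a + f b" by (auto elim!: set_plus_elim)
      then have "z = f (a + b)" using assms by (simp add: endomorphism_def)
      then show "z \<in> f ` (X + Y)" using ab by blast
    qed
    show "f ` (X + Y) \<subseteq> f ` X + f ` Y"
    proof
      fix z assume "z \<in> f ` (X + Y)"
      then obtain a b where ab: "a \<in> X" "b \<in> Y" "z = f (a + b)" by (auto elim!: set_plus_elim)
      then have "z = f a + f b" using assms by (simp add: endomorphism_def)
      then show "z \<in> f ` X + f ` Y" using ab by (auto intro!: set_plus_intro)
    qed
  qed
  moreover have "f ` {0} = {0}" using endo_0[OF assms] by simp
  ultimately show ?thesis using sum_set_linear[of "image f" A I] by (simp add: o_def)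
qed

lemma set_sum_mono_idx:
  fixes A :: "'i \<Rightarrow> 'a::comm_monoid_add set"
  assumes "finite J" "I \<subseteq> J" "\<And>j. j \<in> J \<Longrightarrow> 0 \<in> A j"
  shows "sum A I \<subseteq> sum A J"
proof -
  have "sum A J = sum A (J - I) + sum A I" using sum.subset_diff[OF assms(2,1)] .
  moreover have "0 \<in> sum A (J - I)"
    using assms by (subst set_sum_alt) (auto intro!: exI[of _ "\<lambda>_. 0"])
  ultimately show ?thesis by (metis set_zero_plus2)
qed

lemma set_sum_reindex_sub:
  fixes A :: "'i \<Rightarrow> 'a::comm_monoid_add set"
  assumes "finite J" "inj_on g I" "g ` I \<subseteq> J" "\<And>j. j \<in> J \<Longrightarrow> 0 \<in> A j"
  shows "sum (\<lambda>i. A (g i)) I \<subseteq> sum A J"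
proof -
  have "sum (\<lambda>i. A (g i)) I = sum A (g ` I)" using sum.reindex[OF assms(2), of A] by (simp add: o_def)
  then show ?thesis using set_sum_mono_idx[OF assms(1,3,4)] by simp
qed

lemma set_sum_reindex_sup:
  fixes A :: "'i \<Rightarrow> 'a::comm_monoid_add set"
  assumes "finite I" "inj_on g I" "J \<subseteq> g ` I" "\<And>j. j \<in> g ` I \<Longrightarrow> 0 \<in> A j"
  shows "sum A J \<subseteq> sum (\<lambda>i. A (g i)) I"
proof -
  have "sum (\<lambda>i. A (g i)) I = sum A (g ` I)" using sum.reindex[OF assms(2), of A] by (simp add: o_def)
  then show ?thesis using set_sum_mono_idx[OF _ assms(3,4)] assms(1) by simp
qed

lemma finite_set_sum: "(\<And>i. i \<in> I \<Longrightarrow> finite (A i)) \<Longrightarrow> finite (sum A I)"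
  by (induction I rule: infinite_finite_induct) (auto intro: finite_set_plus)

lemma subgroup_set_sum:
  fixes A :: "'i \<Rightarrow> 'a::ab_group_add set"
  assumes "\<And>i. i \<in> I \<Longrightarrow> is_subgroup (A i)"
  shows "is_subgroup (sum A I)"
proof (cases "finite I")
  case False then show ?thesis by (simp add: is_subgroup_def)
next
  case True
  show ?thesis unfolding is_subgroup_def set_sum_alt[OF True]
  proof safe
    show "\<exists>s. 0 = sum s I \<and> (\<forall>i\<in>I. s i \<in> A i)"
      using assms by (intro exI[of _ "\<lambda>_. 0"]) (auto simp: is_subgroup_def)
  next
    fix s t assume "\<forall>i\<in>I. s i \<in> A i" "\<forall>i\<in>I. t i \<in> A i"
    then show "\<exists>u. sum s I - sum t I = sum u I \<and> (\<forall>i\<in>I. u i \<in> A i)"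
      using assms by (intro exI[of _ "\<lambda>i. s i - t i"]) (auto simp: is_subgroup_def sum_subtractf)
  qed
qed

lemma subgroup_image:
  fixes f :: "'a::ab_group_add \<Rightarrow> 'a"
  assumes e: "endomorphism f" and s: "is_subgroup S"
  shows "is_subgroup (f ` S)"
  unfolding is_subgroup_def
proof (intro conjI ballI)
  show "0 \<in> f ` S" using s endo_0[OF e] unfolding is_subgroup_def by (metis image_eqI)
next
  fix x y assume "x \<in> f ` S" "y \<in> f ` S"
  then obtain u v where uv: "u \<in> S" "v \<in> S" "x = f u" "y = f v" by blast
  then have "u - v \<in> S" using s unfolding is_subgroup_def by blast
  moreover have "x - y = f (u - v)" using uv endo_diff[OF e] by simp
  ultimately show "x - y \<in> f ` S" by blast
qed

lemma zpow_succ: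
  assumes "bij f" shows "zpow f (a + 1) = zpow f a \<circ> f"
proof (cases "a \<ge> 0")
  case True
  then have "nat (a + 1) = Suc (nat a)" by simp
  then show ?thesis using True by (simp add: zpow_def funpow_Suc_right del: funpow.simps)
next
  case False
  define c where "c = nat (- a - 1)"
  have c: "a = - int c - 1" using False by (simp add: c_def)
  have n1: "nat (- a) = Suc c" using c by simp
  have io: "inv f \<circ> f = id" using assms by (simp add: bij_is_inj)
  have e1: "zpow f (a + 1) = inv f ^^ c" using c by (cases "c = 0") (simp_all add: zpow_def)
  have e2: "zpow f a = inv f ^^ c \<circ> inv f" using False n1
    by (simp add: zpow_def funpow_Suc_right del: funpow.simps)
  show ?thesis using e1 e2 io by (simp add: comp_assoc)
qed

lemma zpow_add_nat:
  assumes "bij f" shows "zpow f (a + int j) = zpow f a \<circ> f ^^ j"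
proof (induction j)
  case 0 then show ?case by simp
next
  case (Suc j)
  have "a + int (Suc j) = (a + int j) + 1" by simp
  then have "zpow f (a + int (Suc j)) = zpow f ((a + int j) + 1)" by (rule arg_cong)
  also have "\<dots> = zpow f (a + int j) \<circ> f" by (rule zpow_succ[OF assms])
  also have "\<dots> = zpow f a \<circ> f ^^ j \<circ> f" by (simp only: Suc.IH)
  finally show ?case by (simp add: funpow_Suc_right o_assoc del: funpow.simps)
qed

lemma zpow_pow:
  assumes "bij f" shows "zpow (f ^^ n) k = zpow f (int n * k)"
proof (cases "k \<ge> 0")
  case True then show ?thesis by (simp add: zpow_def funpow_mult nat_mult_distrib mult.commute)
next
  case False
  have "- (int n * k) = int n * (-k)" by simp
  then have "nat (- (int n * k)) = n * nat (-k)"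
    by (simp only: nat_mult_distrib[of "int n"] of_nat_0_le_iff nat_int)
  moreover have "\<not> 0 \<le> int n * k \<or> n = 0" using False by (auto simp: zero_le_mult_iff)
  ultimately show ?thesis using False
    by (auto simp add: zpow_def inv_fn[OF assms] funpow_mult)
qed


lemma cart_cover:
  fixes A :: "'i \<Rightarrow> 'a::comm_monoid_add set" and g :: "'k \<Rightarrow> nat \<Rightarrow> 'i"
  assumes "finite K" "inj_on (\<lambda>(k,j). g k j) (K \<times> {..<n})"
    "I \<subseteq> (\<lambda>(k,j). g k j) ` (K \<times> {..<n})" "\<And>i. 0 \<in> A i"
  shows "sum A I \<subseteq> (\<Sum>k\<in>K. \<Sum>j<n. A (g k j))"
proof -
  have "(\<Sum>k\<in>K. \<Sum>j<n. A (g k j)) = (\<Sum>p\<in>K \<times> {..<n}. A ((\<lambda>(k,j). g k j) p))"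
    by (subst sum.cartesian_product) (simp add: split_def)
  moreover have "sum A I \<subseteq> (\<Sum>p\<in>K \<times> {..<n}. A ((\<lambda>(k,j). g k j) p))"
    by (rule set_sum_reindex_sup) (use assms in auto)
  ultimately show ?thesis by simp
qed

lemma inj_nat_pair: "inj_on (\<lambda>(k,j). n * k + j) (K \<times> {..<(n::nat)})"
proof (rule inj_onI, clarsimp)
  fix k j k' j' assume "j < n" "j' < n" "n * k + j = n * k' + j'"
  then have "(n*k+j) div n = (n*k'+j') div n" "(n*k+j) mod n = (n*k'+j') mod n" by simp_all
  then show "k = k' \<and> j = j'" using \<open>j < n\<close> \<open>j' < n\<close> by simp
qed

lemma inj_int_pair: "inj_on (\<lambda>(k,j). int n * k + int j) (K \<times> {..<(n::nat)})"
proof (rule inj_onI, clarsimp)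
  fix k j k' j' assume a: "j < n" "j' < n" "int n * k + int j = int n * k' + int j'"
  then have "(int n * k + int j) mod int n = (int n * k' + int j') mod int n"
    "(int n * k + int j) div int n = (int n * k' + int j') div int n" by simp_all
  then show "k = k' \<and> j = j'" using a(1,2) by simp
qed

theorem proposition2p10:
  fixes \<phi> :: "'a::ab_group_add \<Rightarrow> 'a" and n :: nat
  assumes "endomorphism \<phi>" and "n \<noteq> 0"
  shows "(pos_expansive \<phi> \<longleftrightarrow> pos_expansive (\<phi> ^^ n))
       \<and> (automorphism \<phi> \<longrightarrow> (expansive \<phi> \<longleftrightarrow> expansive (\<phi> ^^ n)))"
proof (intro conjI impI)
  note e = assms(1)
  have A0: "\<And>S i. is_subgroup S \<Longrightarrow> 0 \<in> (\<phi> ^^ i) ` S"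
    using endo_0[OF endo_pow[OF e]] unfolding is_subgroup_def by (metis image_eqI)
  have S'fin: "\<And>S. finite S \<Longrightarrow> finite (\<Sum>j<n. (\<phi> ^^ j) ` S)"
    by (rule finite_set_sum) simp
  have S'sub: "\<And>S. is_subgroup S \<Longrightarrow> is_subgroup (\<Sum>j<n. (\<phi> ^^ j) ` S)"
    by (rule subgroup_set_sum) (simp add: subgroup_image endo_pow e)
  show "pos_expansive \<phi> \<longleftrightarrow> pos_expansive (\<phi> ^^ n)"
  proof
    assume "pos_expansive \<phi>"
    then obtain S where S: "finite S" "is_subgroup S"
      and cov: "\<And>F. finite F \<Longrightarrow> is_subgroup F \<Longrightarrow> \<exists>m::nat. F \<subseteq> (\<Sum>k\<in>{0..m}. (\<phi> ^^ k) ` S)"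
      unfolding pos_expansive_def by blast
    define S' where "S' = (\<Sum>j<n. (\<phi> ^^ j) ` S)"
    show "pos_expansive (\<phi> ^^ n)" unfolding pos_expansive_def
    proof (intro exI[of _ S'] conjI allI impI)
      show "finite S'" "is_subgroup S'" using S S'fin S'sub S'_def by auto
      fix F :: "'a set" assume "finite F \<and> is_subgroup F"
      then obtain m where m: "F \<subseteq> (\<Sum>k\<in>{0..m}. (\<phi> ^^ k) ` S)" using cov by blast
      have "(\<Sum>k\<in>{0..m}. (\<phi> ^^ k) ` S) \<subseteq> (\<Sum>k\<in>{0..m}. \<Sum>j<n. (\<phi> ^^ (n * k + j)) ` S)"
      proof (rule cart_cover[where g = "\<lambda>k j. n * k + j"])
        show "inj_on (\<lambda>(k, j). n * k + j) ({0..m} \<times> {..<n})" by (rule inj_nat_pair)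
        show "{0..m} \<subseteq> (\<lambda>(k, j). n * k + j) ` ({0..m} \<times> {..<n})"
        proof
          fix i assume i: "i \<in> {0..m}"
          have "i = n * (i div n) + i mod n" by simp
          moreover have "i div n \<le> m" using i by (meson atLeastAtMost_iff div_le_dividend order_trans)
          moreover have "i mod n < n" using assms(2) by simp
          ultimately show "i \<in> (\<lambda>(k, j). n * k + j) ` ({0..m} \<times> {..<n})"
            by (auto intro!: image_eqI[of _ _ "(i div n, i mod n)"])
        qed
      qed (auto intro: A0 S)
      also have "\<dots> = (\<Sum>k\<in>{0..m}. ((\<phi> ^^ n) ^^ k) ` S')"
      proof (rule sum.cong[OF refl])
        fix k
        have "((\<phi> ^^ n) ^^ k) ` S' = (\<Sum>j<n. ((\<phi> ^^ n) ^^ k) ` (\<phi> ^^ j) ` S)"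
          unfolding S'_def by (rule image_set_sum[OF endo_pow[OF endo_pow[OF e]]])
        also have "\<dots> = (\<Sum>j<n. (\<phi> ^^ (n * k + j)) ` S)"
          by (simp add: image_comp funpow_mult funpow_add mult.commute)
        finally show "(\<Sum>j<n. (\<phi> ^^ (n * k + j)) ` S) = ((\<phi> ^^ n) ^^ k) ` S'" by simp
      qed
      finally show "\<exists>m. F \<subseteq> (\<Sum>k\<in>{0..m}. ((\<phi> ^^ n) ^^ k) ` S')" using m by blast
    qed
  next
    assume "pos_expansive (\<phi> ^^ n)"
    then obtain S where S: "finite S" "is_subgroup S"
      and cov: "\<And>F. finite F \<Longrightarrow> is_subgroup F \<Longrightarrow> \<exists>m::nat. F \<subseteq> (\<Sum>k\<in>{0..m}. ((\<phi> ^^ n) ^^ k) ` S)"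
      unfolding pos_expansive_def by blast
    show "pos_expansive \<phi>" unfolding pos_expansive_def
    proof (intro exI[of _ S] conjI allI impI)
      show "finite S" "is_subgroup S" using S by auto
      fix F :: "'a set" assume "finite F \<and> is_subgroup F"
      then obtain m where m: "F \<subseteq> (\<Sum>k\<in>{0..m}. ((\<phi> ^^ n) ^^ k) ` S)" using cov by blast
      also have "\<dots> = (\<Sum>k\<in>{0..m}. (\<lambda>i. (\<phi> ^^ i) ` S) (n * k))"
        by (simp add: funpow_mult mult.commute)
      also have "\<dots> \<subseteq> (\<Sum>i\<in>{0..n*m}. (\<phi> ^^ i) ` S)"
        by (rule set_sum_reindex_sub) (use assms(2) A0 S in \<open>auto simp: inj_on_def\<close>)
      finally show "\<exists>m. F \<subseteq> (\<Sum>k\<in>{0..m}. (\<phi> ^^ k) ` S)" by blast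
    qed
  qed
  assume "automorphism \<phi>"
  then have b: "bij \<phi>" unfolding automorphism_def by simp
  have B0: "\<And>S i. is_subgroup S \<Longrightarrow> 0 \<in> zpow \<phi> i ` S"
    using endo_0[OF endo_zpow[OF e b]] unfolding is_subgroup_def by (metis image_eqI)
  show "expansive \<phi> \<longleftrightarrow> expansive (\<phi> ^^ n)"
  proof
    assume "expansive \<phi>"
    then obtain S where S: "finite S" "is_subgroup S"
      and cov: "\<And>F. finite F \<Longrightarrow> is_subgroup F \<Longrightarrow> \<exists>m::nat. F \<subseteq> (\<Sum>k\<in>{- int m..int m}. zpow \<phi> k ` S)"
      unfolding expansive_def by blast
    define S' where "S' = (\<Sum>j<n. (\<phi> ^^ j) ` S)"
    show "expansive (\<phi> ^^ n)" unfolding expansive_def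
    proof (intro exI[of _ S'] conjI allI impI)
      show "finite S'" "is_subgroup S'" using S S'fin S'sub S'_def by auto
      fix F :: "'a set" assume "finite F \<and> is_subgroup F"
      then obtain m where m: "F \<subseteq> (\<Sum>k\<in>{- int m..int m}. zpow \<phi> k ` S)" using cov by blast
      have "(\<Sum>k\<in>{- int m..int m}. zpow \<phi> k ` S) \<subseteq>
          (\<Sum>k\<in>{- int m..int m}. \<Sum>j<n. zpow \<phi> (int n * k + int j) ` S)"
      proof (rule cart_cover[where g = "\<lambda>k j. int n * k + int j"])
        show "inj_on (\<lambda>(k, j). int n * k + int j) ({- int m..int m} \<times> {..<n})" by (rule inj_int_pair)
        show "{- int m..int m} \<subseteq> (\<lambda>(k, j). int n * k + int j) ` ({- int m..int m} \<times> {..<n})"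
        proof
          fix i assume i: "i \<in> {- int m..int m}"
          have np: "int n > 0" using assms(2) by simp
          have "i = int n * (i div int n) + int (nat (i mod int n))" using np by simp
          moreover have "i div int n \<le> int m" using i np
            by (metis atLeastAtMost_iff div_nonpos_pos_le0 dual_order.trans int_div_le_self leI of_nat_0_le_iff)
          moreover have "i div int n \<ge> - int m" using i np
            by (smt (verit) div_by_1 negative_zle pos_imp_zdiv_neg_iff zdiv_mono2_neg atLeastAtMost_iff)
          moreover have "nat (i mod int n) < n" using np by (simp add: nat_less_iff)
          ultimately show "i \<in> (\<lambda>(k, j). int n * k + int j) ` ({- int m..int m} \<times> {..<n})"
            by (auto intro!: image_eqI[of _ _ "(i div int n, nat (i mod int n))"])
        qed
      qed (auto intro: B0 S)
      also have "\<dots> = (\<Sum>k\<in>{- int m..int m}. zpow (\<phi> ^^ n) k ` S')"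
      proof (rule sum.cong[OF refl])
        fix k
        have "zpow (\<phi> ^^ n) k ` S' = (\<Sum>j<n. zpow (\<phi> ^^ n) k ` (\<phi> ^^ j) ` S)"
          unfolding S'_def by (rule image_set_sum[OF endo_zpow[OF endo_pow[OF e] bij_fn[OF b]]])
        also have "\<dots> = (\<Sum>j<n. zpow \<phi> (int n * k + int j) ` S)"
          by (simp add: image_comp zpow_pow[OF b] zpow_add_nat[OF b])
        finally show "(\<Sum>j<n. zpow \<phi> (int n * k + int j) ` S) = zpow (\<phi> ^^ n) k ` S'" by simp
      qed
      finally show "\<exists>m. F \<subseteq> (\<Sum>k\<in>{- int m..int m}. zpow (\<phi> ^^ n) k ` S')" using m by blast
    qed
  next
    assume "expansive (\<phi> ^^ n)"
    then obtain S where S: "finite S" "is_subgroup S"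
      and cov: "\<And>F. finite F \<Longrightarrow> is_subgroup F \<Longrightarrow> \<exists>m::nat. F \<subseteq> (\<Sum>k\<in>{- int m..int m}. zpow (\<phi> ^^ n) k ` S)"
      unfolding expansive_def by blast
    show "expansive \<phi>" unfolding expansive_def
    proof (intro exI[of _ S] conjI allI impI)
      show "finite S" "is_subgroup S" using S by auto
      fix F :: "'a set" assume "finite F \<and> is_subgroup F"
      then obtain m where m: "F \<subseteq> (\<Sum>k\<in>{- int m..int m}. zpow (\<phi> ^^ n) k ` S)" using cov by blast
      also have "\<dots> = (\<Sum>k\<in>{- int m..int m}. (\<lambda>i. zpow \<phi> i ` S) (int n * k))"
        by (simp add: zpow_pow[OF b])
      also have "\<dots> \<subseteq> (\<Sum>i\<in>{- int (n*m)..int (n*m)}. zpow \<phi> i ` S)"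
      proof (rule set_sum_reindex_sub)
        show "inj_on (\<lambda>k. int n * k) {- int m..int m}" using assms(2) by (auto simp: inj_on_def)
        show "(\<lambda>k. int n * k) ` {- int m..int m} \<subseteq> {- int (n * m)..int (n * m)}"
        proof
          fix x assume "x \<in> (\<lambda>k. int n * k) ` {- int m..int m}"
          then obtain k where k: "- int m \<le> k" "k \<le> int m" "x = int n * k" by auto
          have "int n * (- int m) \<le> int n * k" using k by (intro mult_left_mono) auto
          moreover have "int n * k \<le> int n * int m" using k by (intro mult_left_mono) auto
          ultimately show "x \<in> {- int (n * m)..int (n * m)}" using k by simp
        qed
      qed (use B0 S in auto)
      finally show "\<exists>m. F \<subseteq> (\<Sum>k\<in>{- int m..int m}. zpow \<phi> k ` S)" by blast
    qed
  qed
qed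

end
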